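(* Let $z\in\mathcal F_\mathbb Z\setminus\{\Theta\}$, let $(q,r)$ be its lexicographically maximal FPF-visible inversion, and let $m$ be the largest even integer with $z(m)\ne m-1$. Then: - $q$ is the maximal FPF-visible descent of $z$; - $r$ is the maximal integer with $z(r)<\min\{q,z(q)\}$; - $z(q+1)<z(q+2)<\cdots<z(m)\le q$; - either $z(q)<q<r\le m$, or $q<z(q)=r+1=m$.
   Context: Let $S_\mathbb Z$ be the group of finitely supported permutations of $\mathbb Z$. Let $\Theta(i)=i-(-1)^i$ and $\mathcal F_\mathbb Z=\{w^{-1}\Theta w:w\in S_\mathbb Z\}$. A pair $(i,j)\in\mathbb Z\times\mathbb Z$ is an FPF-visible inversion of $z$ if $i<j$ and $z(j)<\min\{i,z(i)\}$. An integer $i$ is an FPF-visible descent of $z$ if $(i,i+1)$ is an FPF-visible inversion. Pairs are ordered lexicographically. *)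

theory Defs
  imports Main
begin

definition SZ :: "(int \<Rightarrow> int) set" where
  "SZ = {w. bij w \<and> finite {i. w i \<noteq> i}}"

definition Theta :: "int \<Rightarrow> int" where
  "Theta i = i - (-1) ^ nat \<bar>i\<bar>"

definition FZ :: "(int \<Rightarrow> int) set" where
  "FZ = {inv w \<circ> Theta \<circ> w | w. w \<in> SZ}"

definition fpf_vis_inv :: "(int \<Rightarrow> int) \<Rightarrow> int \<Rightarrow> int \<Rightarrow> bool" where
  "fpf_vis_inv z i j \<longleftrightarrow> i < j \<and> z j < min i (z i)"

definition fpf_vis_des :: "(int \<Rightarrow> int) \<Rightarrow> int \<Rightarrow> bool" where
  "fpf_vis_des z i \<longleftrightarrow> fpf_vis_inv z i (i + 1)"

definition lex_le :: "int \<times> int \<Rightarrow> int \<times> int \<Rightarrow> bool" where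
  "lex_le p p' \<longleftrightarrow> fst p < fst p' \<or> (fst p = fst p' \<and> snd p \<le> snd p')"

end

theory Submission
  imports Defs
begin

lemma Theta_even: "even i \<Longrightarrow> Theta i = i - 1"
  by (simp add: Theta_def even_nat_iff)

lemma Theta_odd: "odd i \<Longrightarrow> Theta i = i + 1"
  by (simp add: Theta_def even_nat_iff)

lemma Theta_invol: "Theta (Theta i) = i"
  by (cases "even i") (simp_all add: Theta_even Theta_odd)

lemma Theta_nofix: "Theta i \<noteq> i"
  by (cases "even i") (simp_all add: Theta_even Theta_odd)

lemma FZ_props:
  assumes "z \<in> FZ"
  shows "\<And>x. z (z x) = x" and "\<And>x. z x \<noteq> x"
proof -
  obtain w where w: "bij w" and zw: "z = inv w \<circ> Theta \<circ> w"
    using assms unfolding FZ_def SZ_def by blast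
  have a: "\<And>y. w (inv w y) = y" using w by (simp add: bij_is_surj surj_f_inv_f)
  have b: "\<And>y. inv w (w y) = y" using w by (simp add: bij_is_inj)
  show "\<And>x. z (z x) = x" by (simp add: zw a b Theta_invol)
  show "\<And>x. z x \<noteq> x"
  proof
    fix x assume "z x = x"
    then have "w (z x) = w x" by simp
    then have "Theta (w x) = w x" by (simp add: zw a)
    then show False using Theta_nofix by metis
  qed
qed

theorem lemma3p15:
  fixes z :: "int \<Rightarrow> int" and q r m :: int
  assumes "z \<in> FZ" and "z \<noteq> Theta"
    and "fpf_vis_inv z q r"
    and "\<forall>i j. fpf_vis_inv z i j \<longrightarrow> lex_le (i, j) (q, r)"
    and "even m" and "z m \<noteq> m - 1"
    and "\<forall>n. even n \<and> n > m \<longrightarrow> z n = n - 1"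
  shows "(fpf_vis_des z q \<and> (\<forall>i. fpf_vis_des z i \<longrightarrow> i \<le> q))
    \<and> (z r < min q (z q) \<and> (\<forall>j. z j < min q (z q) \<longrightarrow> j \<le> r))
    \<and> (q < m \<and> (\<forall>i. q < i \<and> i < m \<longrightarrow> z i < z (i + 1)) \<and> z m \<le> q)
    \<and> ((z q < q \<and> q < r \<and> r \<le> m) \<or> (q < z q \<and> z q = r + 1 \<and> r + 1 = m))"
proof -
  note inv = FZ_props(1)[OF assms(1)]
  note nf = FZ_props(2)[OF assms(1)]
  have inj: "\<And>x y. z x = z y \<Longrightarrow> x = y" by (metis inv)
  have qr: "q < r" "z r < q" "z r < z q" using assms(3) unfolding fpf_vis_inv_def by auto
  have lex: "\<And>i j. i < j \<Longrightarrow> z j < min i (z i) \<Longrightarrow> i < q \<or> (i = q \<and> j \<le> r)"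
    using assms(4) unfolding fpf_vis_inv_def lex_le_def by fastforce
  have H: "\<And>i j. q < i \<Longrightarrow> i < j \<Longrightarrow> z j \<ge> min i (z i)"
    using lex by force
  have big_even: "\<And>k. k > m \<Longrightarrow> even k \<Longrightarrow> z k = k - 1" using assms(7) by blast
  have big_odd: "\<And>k. k > m \<Longrightarrow> odd k \<Longrightarrow> z k = k + 1"
  proof -
    fix k :: int assume "k > m" "odd k"
    then have "z (k+1) = k" using big_even by simp
    then show "z k = k + 1" using inv by metis
  qed
  have big_gt: "\<And>k. k > m \<Longrightarrow> z k > m \<and> z k \<ge> k - 1"
  proof -
    fix k :: int assume k: "k > m"
    show "z k > m \<and> z k \<ge> k - 1"
    proof (cases "even k")
      case True
      then have "k \<noteq> m + 1" using assms(5) by auto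
      then show ?thesis using True k big_even by simp
    next
      case False then show ?thesis using k big_odd by simp
    qed
  qed
  have rm: "r \<le> m"
  proof (rule ccontr)
    assume "\<not> r \<le> m"
    then have "z r \<ge> r - 1" using big_gt by simp
    then show False using qr by simp
  qed
  have zm_lt: "z m < m"
  proof (rule ccontr)
    assume "\<not> z m < m"
    then have "z m > m" using nf[of m] by simp
    then have "z (z m) > m" using big_gt by blast
    then show False using inv by simp
  qed
  have zm_lt2: "z m < m - 1" using zm_lt assms(6) by simp
  have zmq: "z m \<le> q"
  proof (rule ccontr)
    assume "\<not> z m \<le> q"
    then have aq: "z m > q" by simp
    define a where "a = z m"
    have za: "z a = m" using inv a_def by simp
    have "z m \<ge> min (a+1) (z (a+1))" using H[of "a+1" m] aq zm_lt2 a_def by simp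
    then have c1: "z (a+1) \<le> a" using a_def by simp
    have "z (a+1) \<ge> min a (z a)" using H[of a "a+1"] aq a_def by simp
    then have "z (a+1) \<ge> a" using za zm_lt a_def by simp
    then have "z (a+1) = a" using c1 by simp
    then have "z a = a + 1" using inv by metis
    then show False using za zm_lt2 a_def by simp
  qed
  have below: "\<And>i. q < i \<Longrightarrow> i < m \<Longrightarrow> z i < z m"
  proof -
    fix i assume i: "q < i" "i < m"
    have "z m \<ge> min i (z i)" using H i by simp
    then have "z i \<le> z m" using zmq i by simp
    moreover have "z i \<noteq> z m" using inj i by force
    ultimately show "z i < z m" by simp
  qed
  have mono: "\<And>i. q < i \<Longrightarrow> i < m \<Longrightarrow> z i < z (i + 1)"
  proof -
    fix i assume i: "q < i" "i < m"
    show "z i < z (i+1)"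
    proof (cases "i + 1 = m")
      case True then show ?thesis using below i by simp
    next
      case False
      have "z (i+1) \<ge> min i (z i)" using H i by simp
      moreover have "z i < i" using below i zmq by fastforce
      ultimately have "z (i+1) \<ge> z i" by simp
      moreover have "z (i+1) \<noteq> z i" using inj by force
      ultimately show ?thesis by simp
    qed
  qed
  have des: "z (q+1) < min q (z q)"
  proof (cases "r = q + 1")
    case True then show ?thesis using qr by simp
  next
    case False
    show ?thesis
    proof (rule ccontr)
      assume "\<not> ?thesis"
      then have "z r < min (q+1) (z (q+1))" using qr by (simp add: not_less; linarith)
      then show False using lex[of "q+1" r] False qr by simp
    qed
  qed
  have p1: "fpf_vis_des z q \<and> (\<forall>i. fpf_vis_des z i \<longrightarrow> i \<le> q)"
  proof (intro conjI allI impI)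
    show "fpf_vis_des z q" using des unfolding fpf_vis_des_def fpf_vis_inv_def by simp
    fix i assume "fpf_vis_des z i"
    then show "i \<le> q" using lex[of i "i+1"] unfolding fpf_vis_des_def fpf_vis_inv_def by force
  qed
  have rmax: "\<And>j. z j < min q (z q) \<Longrightarrow> j \<le> r"
  proof -
    fix j assume j: "z j < min q (z q)"
    show "j \<le> r"
    proof (cases "j \<le> q")
      case True then show ?thesis using qr by simp
    next
      case False then show ?thesis using lex[of q j] j by simp
    qed
  qed
  have p4: "(z q < q \<and> q < r \<and> r \<le> m) \<or> (q < z q \<and> z q = r + 1 \<and> r + 1 = m)"
  proof (cases "z q < q")
    case True then show ?thesis using qr rm by simp
  next
    case False
    then have gq: "q < z q" using nf[of q] by simp
    have "z q \<le> m"
    proof (rule ccontr)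
      assume "\<not> z q \<le> m"
      then have "z (z q) > m" using big_gt by simp
      then show False using inv qr rm by simp
    qed
    moreover have "\<not> z q < m"
    proof
      assume "z q < m"
      then have "z (z q) < z m" using below gq by simp
      then show False using inv zmq by simp
    qed
    ultimately have zq: "z q = m" by simp
    then have zmq': "z m = q" using inv by metis
    have "r \<noteq> m" using qr zmq' by auto
    then have r1: "r \<le> m - 1" using rm by simp
    have "z (m-1) < z m" using below[of "m-1"] qr r1 by simp
    then have "m - 1 \<le> r" using rmax[of "m-1"] zmq' zq qr gq by simp
    then show ?thesis using r1 zq gq by simp
  qed
  show ?thesis using p1 qr rmax rm mono zmq p4 by auto
qed

end
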